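(* Let $\mathcal{G}$ be a connected undirected graph with vertex set partitioned into generator nodes $\mathcal{V}_G$ ($n_g$ nodes) and load nodes $\mathcal{V}_L$ ($n_\ell\ge1$ nodes), $m$ edges, incidence matrix $B=\begin{bmatrix}B_G\\ B_L\end{bmatrix}$ partitioned accordingly, and $\Gamma$ an $m\times m$ positive definite diagonal matrix. Let $M,A$ be $n_g\times n_g$ positive definite diagonal matrices. Define $L_S=B_G\Gamma B_G^T-B_G\Gamma B_L^T(B_L\Gamma B_L^T)^{-1}B_L\Gamma B_G^T$, $\hat p=B_G\Gamma B_L^T(B_L\Gamma B_L^T)^{-1}p^\ast$, and $B_S=B_G(I-\Gamma B_L^T(B_L\Gamma B_L^T)^{-1}B_L)$. Let $L_S=\hat B\hat\Gamma\hat B^T$ be a decomposition where $\hat B$ is the incidence matrix of a graph $\hat{\mathcal{G}}$ on $\mathcal{V}_G$ and $\hat\Gamma$ a positive diagonal weight matrix. For given $u$ and $p^\ast$, let $\theta=\mathrm{col}(\theta_G,\theta_L)$ satisfy the differential algebraic equation $$\begin{bmatrix}M\ddot\theta_G+A\dot\theta_G\\ 0\end{bmatrix}=-\begin{bmatrix}B_G\Gamma B_G^T& B_G\Gamma B_L^T\\ B_L\Gamma B_G^T& B_L\Gamma B_L^T\end{bmatrix}\begin{bmatrix}\theta_G\\ \theta_L\end{bmatrix}+\begin{bmatrix}u\\ p^\ast\end{bmatrix}.$$ Then: (i) $\theta_G$ solves $M\ddot\theta_G=-A\dot\theta_G-L_S\theta_G+u-\hat p$; (ii) $(\eta,\omega_G,\omega_L)$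 with $\eta=B^T\theta$, $\omega_G=\dot\theta_G$, $\omega_L=\dot\theta_L$ solves $\dot\eta=B^T\omega$ (with $\omega=\mathrm{col}(\omega_G,\omega_L)$), $M\dot\omega_G=-A\omega_G-B_G\Gamma\eta+u$, $0=-B_L\Gamma\eta+p^\ast$; (iii) $(\hat\eta,\omega_G)$ with $\hat\eta=\hat B^T\theta_G$ and $\omega_G=\dot\theta_G$ solves $\dot{\hat\eta}=\hat B^T\omega_G$, $M\dot\omega_G=-A\omega_G-\hat B\hat\Gamma\hat\eta+u-\hat p$; (iv) $(\eta_S,\omega_G)$ with $\eta_S=B_S^T\theta_G$ and $\omega_G=\dot\theta_G$ solves $\dot\eta_S=B_S^T\omega_G$, $M\dot\omega_G=-A\omega_G-B_S\Gamma\eta_S+u-\hat p$.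
   Context: $\mathrm{col}(Y_1,Y_2)$ denotes the vertically stacked matrix $[Y_1^T\ Y_2^T]^T$. The incidence matrix has entries $+1$ (tail), $-1$ (head), $0$ otherwise, for an arbitrary orientation of edges. $L_S$ is a Laplacian matrix of a graph on $\mathcal{V}_G$, so a decomposition $L_S=\hat B\hat\Gamma\hat B^T$ exists. $B_S$ is called the projected incidence matrix. *)

theory Defs
  imports "HOL-Analysis.Analysis"
begin

definition incidence :: "('e::finite \<Rightarrow> 'v::finite) \<Rightarrow> ('e \<Rightarrow> 'v) \<Rightarrow> real^'e^'v" where
  "incidence src tgt = (\<chi> v e. if v = src e then 1 else if v = tgt e then -1 else 0)"

definition loopless :: "('e \<Rightarrow> 'v) \<Rightarrow> ('e \<Rightarrow> 'v) \<Rightarrow> bool" where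
  "loopless src tgt \<longleftrightarrow> (\<forall>e. src e \<noteq> tgt e)"

definition connected_graph :: "('e \<Rightarrow> 'v) \<Rightarrow> ('e \<Rightarrow> 'v) \<Rightarrow> bool" where
  "connected_graph src tgt \<longleftrightarrow>
     (\<forall>x y. (x, y) \<in> (\<Union>e. {(src e, tgt e), (tgt e, src e)})\<^sup>*)"

definition diag_mat :: "('n::finite \<Rightarrow> real) \<Rightarrow> real^'n^'n" where
  "diag_mat d = (\<chi> i j. if i = j then d i else 0)"

end

theory Submission
  imports Defs
begin

lemma minv:
  fixes K :: "real^'n^'n"
  assumes "invertible K"
  shows "K ** matrix_inv K = mat 1" "matrix_inv K ** K = mat 1"
  using someI_ex[OF assms[unfolded invertible_def]] unfolding matrix_inv_def by auto

lemma split_vec: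
  fixes B :: "real^'e^('g::finite + 'l::finite)"
  shows "transpose B *v (\<chi> v. case v of Inl i \<Rightarrow> a$i | Inr j \<Rightarrow> b$j)
     = transpose (\<chi> i e. B $ Inl i $ e) *v a + transpose (\<chi> j e. B $ Inr j $ e) *v b"
proof -
  have U: "(UNIV :: ('g+'l) set) = Inl ` UNIV \<union> Inr ` UNIV" by (rule UNIV_sum)
  show ?thesis
    unfolding vec_eq_iff
    apply (simp add: matrix_vector_mult_def transpose_def)
    apply (subst U)
    apply (subst sum.union_disjoint, auto simp: sum.reindex)
    done
qed

lemma diag_transpose: "transpose (diag_mat d) = diag_mat d"
  by (simp add: diag_mat_def transpose_def vec_eq_iff)

lemma diag_quad: "(w::real^'n) \<bullet> (diag_mat d *v w) = (\<Sum>e\<in>UNIV. d e * (w$e)^2)"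
proof -
  have "\<And>i. (\<Sum>j\<in>UNIV. (if i = j then d i else 0) * w$j) = d i * w$i"
    by (simp add: if_distrib[of "\<lambda>x. x * _"] cong: if_cong)
  then show ?thesis
    by (simp add: diag_mat_def inner_vec_def matrix_vector_mult_def power2_eq_square mult.assoc mult.left_commute)
qed

lemma inc_apply:
  assumes "loopless src tgt"
  shows "(transpose (incidence src tgt) *v y) $ e = y $ src e - y $ tgt e"
proof -
  have ne: "src e \<noteq> tgt e" using assms by (simp add: loopless_def)
  have "(transpose (incidence src tgt) *v y) $ e =
     (\<Sum>v\<in>UNIV. (if v = src e then y $ v else 0) + (if v = tgt e then - (y $ v) else 0))"
    using ne by (auto simp: incidence_def transpose_def matrix_vector_mult_def intro!: sum.cong)
  also have "\<dots> = y $ src e - y $ tgt e"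
    by (simp add: sum.distrib)
  finally show ?thesis .
qed

lemma grounded_inv:
  fixes src tgt :: "'e::finite \<Rightarrow> ('g::finite + 'l::finite)" and gam :: "'e \<Rightarrow> real"
  assumes lp: "loopless src tgt" and cn: "connected_graph src tgt" and gp: "\<forall>e. gam e > 0"
  defines "BL \<equiv> (\<chi> j e. incidence src tgt $ Inr j $ e)"
  shows "invertible (BL ** diag_mat gam ** transpose BL)"
  unfolding invertible_left_inverse matrix_left_invertible_ker
proof (intro allI impI)
  fix x :: "real^'l"
  assume K0: "(BL ** diag_mat gam ** transpose BL) *v x = 0"
  define w where "w = transpose BL *v x"
  have "x \<bullet> ((BL ** diag_mat gam ** transpose BL) *v x) = w \<bullet> (diag_mat gam *v w)"
    by (simp add: w_def matrix_vector_mul_assoc[symmetric] dot_lmul_matrix[symmetric])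
  hence "(\<Sum>e\<in>UNIV. gam e * (w$e)^2) = 0" using K0 by (simp add: diag_quad)
  moreover have nn: "\<forall>e\<in>UNIV. 0 \<le> gam e * (w$e)^2"
    using gp by (simp add: less_imp_le)
  ultimately have "\<forall>e\<in>UNIV. gam e * (w$e)^2 = 0"
    using sum_nonneg_eq_0_iff[of UNIV "\<lambda>e. gam e * (w$e)^2"] by simp
  hence w0: "\<And>e. w$e = 0" using gp by (metis mult_eq_0_iff power_eq_0_iff less_irrefl UNIV_I)
  define y :: "real^('g+'l)" where "y = (\<chi> v. case v of Inl i \<Rightarrow> (0::real^'g)$i | Inr j \<Rightarrow> x$j)"
  have "transpose (incidence src tgt) *v y = transpose (\<chi> i e. incidence src tgt $ Inl i $ e) *v 0 + w"
    unfolding y_def w_def BL_def by (rule split_vec)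
  hence "\<And>e. (transpose (incidence src tgt) *v y) $ e = 0" using w0 by simp
  hence eq: "\<And>e. y $ src e = y $ tgt e" using inc_apply[OF lp] by (metis eq_iff_diff_eq_0)
  have "\<And>a b. (a, b) \<in> (\<Union>e. {(src e, tgt e), (tgt e, src e)})\<^sup>* \<Longrightarrow> y $ a = y $ b"
  proof -
    fix a b assume "(a, b) \<in> (\<Union>e. {(src e, tgt e), (tgt e, src e)})\<^sup>*"
    then show "y $ a = y $ b"
      by (induction rule: rtrancl_induct) (auto simp: eq)
  qed
  hence "\<And>j. y $ Inl undefined = y $ Inr j" using cn unfolding connected_graph_def by blast
  hence "\<And>j. x $ j = 0" by (simp add: y_def)
  thus "x = 0" by (simp add: vec_eq_iff)
qed

lemma transpose_diff: "transpose (A - B) = transpose A - transpose (B::'a::ab_group_add^'n^'m)"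
  by (simp add: transpose_def vec_eq_iff)

lemma inv_sym:
  fixes K :: "real^'n^'n"
  assumes "invertible K" "transpose K = K"
  shows "transpose (matrix_inv K) = matrix_inv K"
proof -
  have "transpose (matrix_inv K) ** K = mat 1"
    by (metis assms matrix_transpose_mul minv(1) transpose_mat)
  hence "transpose (matrix_inv K) = (transpose (matrix_inv K) ** K) ** matrix_inv K"
    by (metis assms(1) matrix_mul_assoc matrix_mul_rid minv(1))
  thus ?thesis using \<open>transpose (matrix_inv K) ** K = mat 1\<close> by simp
qed

lemma mvd:
  fixes A :: "real^'n^'m"
  shows "(g has_vector_derivative g') F \<Longrightarrow> ((\<lambda>x. A *v g x) has_vector_derivative A *v g') F"
  by (rule bounded_linear.has_vector_derivative[OF matrix_vector_mul_bounded_linear])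

theorem proposition2:
  fixes src tgt :: "'e::finite \<Rightarrow> ('g::finite + 'l::finite)"
    and gam :: "'e \<Rightarrow> real"
    and mm aa :: "'g \<Rightarrow> real"
    and hsrc htgt :: "'f::finite \<Rightarrow> 'g"
    and hgam :: "'f \<Rightarrow> real"
    and u :: "real \<Rightarrow> real^'g"
    and pstar :: "real^'l"
    and I :: "real set"
    and thG dthG ddthG :: "real \<Rightarrow> real^'g"
    and thL :: "real \<Rightarrow> real^'l"
    and B :: "real^'e^('g + 'l)" and BG :: "real^'e^'g" and BL :: "real^'e^'l"
    and Gam :: "real^'e^'e" and M A :: "real^'g^'g"
    and LS :: "real^'g^'g" and phat :: "real^'g" and BS :: "real^'e^'g"
    and Bh :: "real^'f^'g" and Gamh :: "real^'f^'f"
  assumes loopless: "loopless src tgt"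
    and conn: "connected_graph src tgt"
    and gam_pos: "\<forall>e. gam e > 0"
    and mm_pos: "\<forall>i. mm i > 0"
    and aa_pos: "\<forall>i. aa i > 0"
  defines "B \<equiv> incidence src tgt"
    and "BG \<equiv> (\<chi> i e. B $ Inl i $ e)"
    and "BL \<equiv> (\<chi> j e. B $ Inr j $ e)"
    and "Gam \<equiv> diag_mat gam"
    and "M \<equiv> diag_mat mm"
    and "A \<equiv> diag_mat aa"
    and "LS \<equiv> BG ** Gam ** transpose BG
              - BG ** Gam ** transpose BL ** matrix_inv (BL ** Gam ** transpose BL) ** BL ** Gam ** transpose BG"
    and "phat \<equiv> (BG ** Gam ** transpose BL ** matrix_inv (BL ** Gam ** transpose BL)) *v pstar"
    and "BS \<equiv> BG ** (mat 1 - Gam ** transpose BL ** matrix_inv (BL ** Gam ** transpose BL) ** BL)"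
    and "Bh \<equiv> incidence hsrc htgt"
    and "Gamh \<equiv> diag_mat hgam"
  assumes hloopless: "loopless hsrc htgt"
    and hgam_pos: "\<forall>f. hgam f > 0"
    and decomp: "LS = Bh ** Gamh ** transpose Bh"
    and I_interval: "is_interval I"
    and dthG: "\<forall>t\<in>I. (thG has_vector_derivative dthG t) (at t within I)"
    and ddthG: "\<forall>t\<in>I. (dthG has_vector_derivative ddthG t) (at t within I)"
    and dae_G: "\<forall>t\<in>I. M *v ddthG t + A *v dthG t =
                   - ((BG ** Gam ** transpose BG) *v thG t + (BG ** Gam ** transpose BL) *v thL t) + u t"
    and dae_L: "\<forall>t\<in>I. 0 =
                   - ((BL ** Gam ** transpose BG) *v thG t + (BL ** Gam ** transpose BL) *v thL t) + pstar"
  shows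
    "(\<forall>t\<in>I. M *v ddthG t = - (A *v dthG t) - LS *v thG t + u t - phat)
     \<and> (let th = (\<lambda>t. \<chi> v. case v of Inl i \<Rightarrow> thG t $ i | Inr j \<Rightarrow> thL t $ j);
            eta = (\<lambda>t. transpose B *v th t)
        in \<exists>omL :: real \<Rightarrow> real^'l.
             (\<forall>t\<in>I. (thL has_vector_derivative omL t) (at t within I)) \<and>
             (\<forall>t\<in>I.
                (eta has_vector_derivative
                   transpose B *v (\<chi> v. case v of Inl i \<Rightarrow> dthG t $ i | Inr j \<Rightarrow> omL t $ j))
                   (at t within I)
              \<and> M *v ddthG t = - (A *v dthG t) - (BG ** Gam) *v eta t + u t
              \<and> 0 = - ((BL ** Gam) *v eta t) + pstar))
     \<and> (let etah = (\<lambda>t. transpose Bh *v thG t)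
        in \<forall>t\<in>I. (etah has_vector_derivative transpose Bh *v dthG t) (at t within I)
              \<and> M *v ddthG t = - (A *v dthG t) - (Bh ** Gamh) *v etah t + u t - phat)
     \<and> (let etaS = (\<lambda>t. transpose BS *v thG t)
        in \<forall>t\<in>I. (etaS has_vector_derivative transpose BS *v dthG t) (at t within I)
              \<and> M *v ddthG t = - (A *v dthG t) - (BS ** Gam) *v etaS t + u t - phat)"
proof -
  define K where "K = BL ** Gam ** transpose BL"
  define Ki where "Ki = matrix_inv K"
  have Kinv: "invertible K" unfolding K_def BL_def Gam_def B_def
    by (rule grounded_inv[OF loopless conn gam_pos])
  have KKi: "\<And>v. K *v (Ki *v v) = v" using minv(1)[OF Kinv]
    by (simp add: Ki_def matrix_vector_mul_assoc)
  have KiK: "\<And>v. Ki *v (K *v v) = v" using minv(2)[OF Kinv]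
    by (simp add: Ki_def matrix_vector_mul_assoc)
  have GT: "transpose Gam = Gam" unfolding Gam_def by (rule diag_transpose)
  have KT: "transpose K = K" unfolding K_def
    by (simp add: matrix_transpose_mul GT matrix_mul_assoc)
  have KiT: "transpose Ki = Ki" unfolding Ki_def by (rule inv_sym[OF Kinv KT])
  note ss = matrix_vector_mul_assoc[symmetric] matrix_vector_mult_diff_rdistrib
    matrix_vector_mult_diff_distrib matrix_vector_right_distrib matrix_vector_mult_add_rdistrib
  have Kv: "\<And>v. K *v v = BL *v (Gam *v (transpose BL *v v))"
    unfolding K_def by (simp only: ss)
  have thL_eq: "\<And>t. t \<in> I \<Longrightarrow> thL t = Ki *v pstar - Ki *v (BL *v (Gam *v (transpose BG *v thG t)))"
  proof -
    fix t assume t: "t \<in> I"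
    have "K *v thL t = pstar - BL *v (Gam *v (transpose BG *v thG t))"
      using dae_L[rule_format, OF t] unfolding K_def
      by (simp only: ss del: transpose_matrix_vector) (simp_all add: algebra_simps)
    hence "Ki *v (K *v thL t) = Ki *v pstar - Ki *v (BL *v (Gam *v (transpose BG *v thG t)))"
      by (simp add: matrix_vector_mult_diff_distrib)
    thus "thL t = Ki *v pstar - Ki *v (BL *v (Gam *v (transpose BG *v thG t)))"
      by (simp only: KiK)
  qed
  have LSv: "\<And>v. LS *v v = BG *v (Gam *v (transpose BG *v v))
      - BG *v (Gam *v (transpose BL *v (Ki *v (BL *v (Gam *v (transpose BG *v v))))))"
    unfolding LS_def Ki_def K_def by (simp only: ss)
  have phatv: "phat = BG *v (Gam *v (transpose BL *v (Ki *v pstar)))"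
    unfolding phat_def Ki_def K_def by (simp only: ss)
  have P1: "\<forall>t\<in>I. M *v ddthG t = - (A *v dthG t) - LS *v thG t + u t - phat"
  proof
    fix t assume t: "t \<in> I"
    have "M *v ddthG t = - (A *v dthG t) - (BG *v (Gam *v (transpose BG *v thG t))
            + BG *v (Gam *v (transpose BL *v thL t))) + u t"
      using dae_G[rule_format, OF t]
      by (simp only: ss del: transpose_matrix_vector) (simp_all add: algebra_simps)
    also have "\<dots> = - (A *v dthG t) - LS *v thG t + u t - phat"
      unfolding LSv phatv thL_eq[OF t]
      by (simp del: transpose_matrix_vector add: algebra_simps)
    finally show "M *v ddthG t = - (A *v dthG t) - LS *v thG t + u t - phat" .
  qed
  define omL where "omL = (\<lambda>t. - (Ki *v (BL *v (Gam *v (transpose BG *v dthG t)))))"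
  have dL: "\<forall>t\<in>I. (thL has_vector_derivative omL t) (at t within I)"
  proof
    fix t assume t: "t \<in> I"
    have "((\<lambda>t. Ki *v pstar - Ki *v (BL *v (Gam *v (transpose BG *v thG t)))) has_vector_derivative
          0 - Ki *v (BL *v (Gam *v (transpose BG *v dthG t)))) (at t within I)"
      by (intro has_vector_derivative_diff has_vector_derivative_const mvd dthG[rule_format, OF t])
    thus "(thL has_vector_derivative omL t) (at t within I)"
      unfolding omL_def
      by (intro has_vector_derivative_transform[OF t thL_eq]) simp_all
  qed
  have P2: "let th = (\<lambda>t. \<chi> v. case v of Inl i \<Rightarrow> thG t $ i | Inr j \<Rightarrow> thL t $ j);
            eta = (\<lambda>t. transpose B *v th t)
        in \<exists>omL :: real \<Rightarrow> real^'l.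
             (\<forall>t\<in>I. (thL has_vector_derivative omL t) (at t within I)) \<and>
             (\<forall>t\<in>I.
                (eta has_vector_derivative
                   transpose B *v (\<chi> v. case v of Inl i \<Rightarrow> dthG t $ i | Inr j \<Rightarrow> omL t $ j))
                   (at t within I)
              \<and> M *v ddthG t = - (A *v dthG t) - (BG ** Gam) *v eta t + u t
              \<and> 0 = - ((BL ** Gam) *v eta t) + pstar)"
    unfolding Let_def
  proof (rule exI[of _ omL], rule conjI[OF dL], intro ballI conjI)
    have etaeq: "\<And>t. transpose B *v (\<chi> v. case v of Inl i \<Rightarrow> thG t $ i | Inr j \<Rightarrow> thL t $ j)
        = transpose BG *v thG t + transpose BL *v thL t"
      unfolding BG_def BL_def by (rule split_vec)
    fix t assume t: "t \<in> I"
    have "((\<lambda>t. transpose BG *v thG t + transpose BL *v thL t) has_vector_derivative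
          transpose BG *v dthG t + transpose BL *v omL t) (at t within I)"
      by (intro has_vector_derivative_add mvd dthG[rule_format, OF t] dL[rule_format, OF t])
    thus "((\<lambda>t. transpose B *v (\<chi> v. case v of Inl i \<Rightarrow> thG t $ i | Inr j \<Rightarrow> thL t $ j)) has_vector_derivative
       transpose B *v (\<chi> v. case v of Inl i \<Rightarrow> dthG t $ i | Inr j \<Rightarrow> omL t $ j)) (at t within I)"
      unfolding etaeq unfolding BG_def BL_def split_vec .
    show "M *v ddthG t = - (A *v dthG t) - (BG ** Gam) *v
        (transpose B *v (\<chi> v. case v of Inl i \<Rightarrow> thG t $ i | Inr j \<Rightarrow> thL t $ j)) + u t"
      unfolding etaeq using dae_G[rule_format, OF t]
      by (simp only: ss del: transpose_matrix_vector) (simp_all add: algebra_simps)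
    show "0 = - ((BL ** Gam) *v
        (transpose B *v (\<chi> v. case v of Inl i \<Rightarrow> thG t $ i | Inr j \<Rightarrow> thL t $ j))) + pstar"
      unfolding etaeq using dae_L[rule_format, OF t]
      by (simp only: ss del: transpose_matrix_vector)
  qed
  have P3: "let etah = (\<lambda>t. transpose Bh *v thG t)
        in \<forall>t\<in>I. (etah has_vector_derivative transpose Bh *v dthG t) (at t within I)
              \<and> M *v ddthG t = - (A *v dthG t) - (Bh ** Gamh) *v etah t + u t - phat"
    unfolding Let_def
  proof (intro ballI conjI)
    fix t assume t: "t \<in> I"
    show "((\<lambda>t. transpose Bh *v thG t) has_vector_derivative transpose Bh *v dthG t) (at t within I)"
      by (rule mvd[OF dthG[rule_format, OF t]])
    have "(Bh ** Gamh) *v (transpose Bh *v thG t) = LS *v thG t"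
      by (simp only: decomp matrix_vector_mul_assoc)
    thus "M *v ddthG t = - (A *v dthG t) - (Bh ** Gamh) *v (transpose Bh *v thG t) + u t - phat"
      using P1 t by simp
  qed
  have BSeq: "\<And>v. (BS ** Gam) *v (transpose BS *v v) = LS *v v"
  proof -
    fix v
    define z where "z = transpose BG *v v"
    have tBS: "transpose BS *v v = z - transpose BL *v (Ki *v (BL *v (Gam *v z)))"
      unfolding BS_def z_def Ki_def[symmetric] K_def[symmetric]
      by (simp only: matrix_transpose_mul transpose_diff transpose_mat GT KiT transpose_transpose ss
          matrix_vector_mul_lid del: transpose_matrix_vector)
    define w where "w = transpose BS *v v"
    have BLw: "BL *v (Gam *v w) = 0"
      unfolding w_def tBS matrix_vector_mult_diff_distrib
      using KKi[of "BL *v (Gam *v z)"] unfolding Kv by simp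
    have "(BS ** Gam) *v w = BG *v (Gam *v w) - BG *v (Gam *v (transpose BL *v (Ki *v (BL *v (Gam *v w)))))"
      unfolding BS_def Ki_def[symmetric] K_def[symmetric]
      by (simp only: ss matrix_vector_mul_lid)
    also have "\<dots> = BG *v (Gam *v w)" using BLw by simp
    also have "\<dots> = LS *v v"
      unfolding LSv w_def tBS z_def by (simp del: transpose_matrix_vector add: matrix_vector_mult_diff_distrib)
    finally show "(BS ** Gam) *v (transpose BS *v v) = LS *v v" unfolding w_def .
  qed
  have P4: "let etaS = (\<lambda>t. transpose BS *v thG t)
        in \<forall>t\<in>I. (etaS has_vector_derivative transpose BS *v dthG t) (at t within I)
              \<and> M *v ddthG t = - (A *v dthG t) - (BS ** Gam) *v etaS t + u t - phat"
    unfolding Let_def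
  proof (intro ballI conjI)
    fix t assume t: "t \<in> I"
    show "((\<lambda>t. transpose BS *v thG t) has_vector_derivative transpose BS *v dthG t) (at t within I)"
      by (rule mvd[OF dthG[rule_format, OF t]])
    show "M *v ddthG t = - (A *v dthG t) - (BS ** Gam) *v (transpose BS *v thG t) + u t - phat"
      using P1 t BSeq by simp
  qed
  show ?thesis using P1 P2 P3 P4 by blast
qed

end
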